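(* Let $R$ be a commutative ring and $M$ an $R$-module. The following are equivalent: (1) $M$ is Noetherian; (2) $M$ is uniformly $(R\setminus\mathfrak p)$-Noetherian for every prime ideal $\mathfrak p$ of $R$; (3) $M$ is uniformly $(R\setminus\mathfrak m)$-Noetherian for every maximal ideal $\mathfrak m$ of $R$.
   Context: For a multiplicative subset $S$ of $R$, an $R$-module $M$ is uniformly $S$-Noetherian if there exists a single $s\in S$ such that for every submodule $N$ of $M$ there is a finitely generated submodule $F\subseteq N$ with $sN\subseteq F$. *)

theory Defs
  imports "HOL-Algebra.Module" "HOL-Algebra.Ideal"
begin

definition gen_submodule :: "('a, 'c) ring_scheme \<Rightarrow> ('a, 'b, 'm) module_scheme \<Rightarrow> 'b set \<Rightarrow> 'b set" where
  "gen_submodule R M A = \<Inter> {H. submodule H R M \<and> A \<subseteq> H}"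

definition fg_submodule :: "('a, 'c) ring_scheme \<Rightarrow> ('a, 'b, 'm) module_scheme \<Rightarrow> 'b set \<Rightarrow> bool" where
  "fg_submodule R M N \<longleftrightarrow> submodule N R M \<and>
     (\<exists>A. finite A \<and> A \<subseteq> carrier M \<and> N = gen_submodule R M A)"

definition noetherian_module :: "('a, 'c) ring_scheme \<Rightarrow> ('a, 'b, 'm) module_scheme \<Rightarrow> bool" where
  "noetherian_module R M \<longleftrightarrow> (\<forall>N. submodule N R M \<longrightarrow> fg_submodule R M N)"

definition uniformly_S_noetherian :: "('a, 'c) ring_scheme \<Rightarrow> ('a, 'b, 'm) module_scheme \<Rightarrow> 'a set \<Rightarrow> bool" where
  "uniformly_S_noetherian R M S \<longleftrightarrow>
     (\<exists>s\<in>S. \<forall>N. submodule N R M \<longrightarrow>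
        (\<exists>F. fg_submodule R M F \<and> F \<subseteq> N \<and> (\<lambda>x. s \<odot>\<^bsub>M\<^esub> x) ` N \<subseteq> F))"

end

theory Submission
  imports Defs
begin

lemma (in ring) exists_maximalideal:
  assumes I: "ideal I R" and one: "\<one> \<notin> I"
  shows "\<exists>m. maximalideal m R \<and> I \<subseteq> m"
proof -
  define A where "A = {J. ideal J R \<and> I \<subseteq> J \<and> \<one> \<notin> J}"
  have "\<exists>m\<in>A. \<forall>X\<in>A. m \<subseteq> X \<longrightarrow> X = m"
  proof (rule subset_Zorn_nonempty)
    show "A \<noteq> {}" using I one unfolding A_def by blast
  next
    fix C assume Cne: "C \<noteq> {}" and ch: "subset.chain A C"
    have CA: "C \<subseteq> A" and lin: "\<And>X Y. X \<in> C \<Longrightarrow> Y \<in> C \<Longrightarrow> X \<subseteq> Y \<or> Y \<subseteq> X"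
      using ch unfolding subset.chain_def by auto
    have idl: "\<And>X. X \<in> C \<Longrightarrow> ideal X R" using CA unfolding A_def by auto
    have "ideal (\<Union>C) R"
    proof (rule idealI)
      show "ring R" by (rule ring_axioms)
      show "subgroup (\<Union>C) (add_monoid R)"
      proof (rule add.subgroupI)
        show "\<Union>C \<subseteq> carrier R"
          using idl by (auto dest: ideal.Icarr)
        obtain X0 where "X0 \<in> C" using Cne by blast
        then show "\<Union>C \<noteq> {}"
          using additive_subgroup.zero_closed[OF ideal.axioms(1)[OF idl[of X0]]] by blast
        show "\<ominus> a \<in> \<Union>C" if asm: "a \<in> \<Union>C" for a
        proof -
          obtain X where X: "X \<in> C" "a \<in> X" using asm by blast
          then show ?thesis using additive_subgroup.a_inv_closed[OF ideal.axioms(1)[OF idl[of X]]] by blast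
        qed
        show "a \<oplus> b \<in> \<Union>C" if asm: "a \<in> \<Union>C" "b \<in> \<Union>C" for a b
        proof -
          obtain X where X: "X \<in> C" "a \<in> X" using asm by blast
          obtain Y where Y: "Y \<in> C" "b \<in> Y" using asm by blast
          show ?thesis
          proof (cases "X \<subseteq> Y")
            case True
            then have "a \<oplus> b \<in> Y"
              using X Y additive_subgroup.a_closed[OF ideal.axioms(1)[OF idl[of Y]]] by blast
            then show ?thesis using Y by blast
          next
            case False
            then have "Y \<subseteq> X" using lin X Y by blast
            then have "a \<oplus> b \<in> X"
              using X Y additive_subgroup.a_closed[OF ideal.axioms(1)[OF idl[of X]]] by blast
            then show ?thesis using X by blast
          qed
        qed
      qed
      show "x \<otimes> a \<in> \<Union>C" if asm: "a \<in> \<Union>C" "x \<in> carrier R" for a x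
      proof -
        obtain X where X: "X \<in> C" "a \<in> X" using asm by blast
        then show ?thesis using ideal.I_l_closed[OF idl[of X]] asm(2) by blast
      qed
      show "a \<otimes> x \<in> \<Union>C" if asm: "a \<in> \<Union>C" "x \<in> carrier R" for a x
      proof -
        obtain X where X: "X \<in> C" "a \<in> X" using asm by blast
        then show ?thesis using ideal.I_r_closed[OF idl[of X]] asm(2) by blast
      qed
    qed
    moreover have "I \<subseteq> \<Union>C" using Cne CA unfolding A_def by auto
    moreover have "\<one> \<notin> \<Union>C" using CA unfolding A_def by auto
    ultimately show "\<Union>C \<in> A" unfolding A_def by blast
  qed
  then obtain m where mA: "m \<in> A" and mmax: "\<And>X. X \<in> A \<Longrightarrow> m \<subseteq> X \<Longrightarrow> X = m" by blast
  have mi: "ideal m R" and Im: "I \<subseteq> m" and m1: "\<one> \<notin> m" using mA unfolding A_def by auto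
  have "maximalideal m R"
  proof (rule maximalidealI[OF mi])
    show "carrier R \<noteq> m" using m1 by auto
    fix J assume J: "ideal J R" "m \<subseteq> J" "J \<subseteq> carrier R"
    show "J = m \<or> J = carrier R"
    proof (cases "\<one> \<in> J")
      case True then show ?thesis using J ideal.one_imp_carrier by blast
    next
      case False then have "J \<in> A" using J Im unfolding A_def by auto
      then show ?thesis using mmax J by blast
    qed
  qed
  then show ?thesis using Im by blast
qed

context module
begin

lemma sub_zero: "submodule H R M \<Longrightarrow> \<zero>\<^bsub>M\<^esub> \<in> H"
  using subgroup.one_closed[OF submodule.axioms(1)] by fastforce

lemma gen_sub: "A \<subseteq> carrier M \<Longrightarrow> submodule (gen_submodule R M A) R M"
  unfolding gen_submodule_def
proof (rule submoduleI)
  assume A: "A \<subseteq> carrier M"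
  show "\<Inter> {H. submodule H R M \<and> A \<subseteq> H} \<subseteq> carrier M"
    using carrier_is_submodule A by blast
  show "\<zero>\<^bsub>M\<^esub> \<in> \<Inter> {H. submodule H R M \<and> A \<subseteq> H}"
    using sub_zero by blast
  show "\<ominus>\<^bsub>M\<^esub> a \<in> \<Inter> {H. submodule H R M \<and> A \<subseteq> H}" if asm: "a \<in> \<Inter> {H. submodule H R M \<and> A \<subseteq> H}" for a
    using asm submoduleE(3) by blast
  show "a \<oplus>\<^bsub>M\<^esub> b \<in> \<Inter> {H. submodule H R M \<and> A \<subseteq> H}"
    if asm: "a \<in> \<Inter> {H. submodule H R M \<and> A \<subseteq> H}" "b \<in> \<Inter> {H. submodule H R M \<and> A \<subseteq> H}" for a b
    using asm submoduleE(5) by blast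
  show "a \<odot>\<^bsub>M\<^esub> x \<in> \<Inter> {H. submodule H R M \<and> A \<subseteq> H}"
    if asm: "a \<in> carrier R" "x \<in> \<Inter> {H. submodule H R M \<and> A \<subseteq> H}" for a x
    using asm submoduleE(4) by blast
qed

lemma gen_incl: "A \<subseteq> gen_submodule R M A"
  unfolding gen_submodule_def by blast

lemma gen_min: "submodule H R M \<Longrightarrow> A \<subseteq> H \<Longrightarrow> gen_submodule R M A \<subseteq> H"
  unfolding gen_submodule_def by blast

lemma gen_mono: "A \<subseteq> B \<Longrightarrow> B \<subseteq> carrier M \<Longrightarrow> gen_submodule R M A \<subseteq> gen_submodule R M B"
  by (meson gen_incl gen_min gen_sub order_trans)

definition good :: "'a \<Rightarrow> bool" where
  "good r \<longleftrightarrow> r \<in> carrier R \<and> (\<forall>N. submodule N R M \<longrightarrow>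
        (\<exists>F. fg_submodule R M F \<and> F \<subseteq> N \<and> (\<lambda>x. r \<odot>\<^bsub>M\<^esub> x) ` N \<subseteq> F))"

lemma good_ideal: "ideal {r. good r} R"
proof (rule idealI)
  show "ring R" by (rule R.ring_axioms)
  show "subgroup {r. good r} (add_monoid R)"
  proof (rule R.add.subgroupI)
    show "{r. good r} \<subseteq> carrier R" unfolding good_def by auto
    have "good \<zero>"
      unfolding good_def
    proof (intro conjI allI impI)
      fix N assume N: "submodule N R M"
      have Nc: "N \<subseteq> carrier M" using N submoduleE(1) by blast
      let ?F = "gen_submodule R M {}"
      have "fg_submodule R M ?F" unfolding fg_submodule_def using gen_sub[of "{}"] by auto
      moreover have "?F \<subseteq> N" using gen_min[OF N] by blast
      moreover have "(\<lambda>x. \<zero> \<odot>\<^bsub>M\<^esub> x) ` N \<subseteq> ?F"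
        using Nc sub_zero[OF gen_sub[of "{}"]] by (auto simp: subset_iff)
      ultimately show "\<exists>F. fg_submodule R M F \<and> F \<subseteq> N \<and> (\<lambda>x. \<zero> \<odot>\<^bsub>M\<^esub> x) ` N \<subseteq> F" by blast
    qed simp
    then show "{r. good r} \<noteq> {}" by blast
    show "\<ominus> a \<in> {r. good r}" if asm: "a \<in> {r. good r}" for a
    proof -
      have a: "a \<in> carrier R" using asm unfolding good_def by auto
      have "good (\<ominus> a)" unfolding good_def
      proof (intro conjI allI impI)
        show "\<ominus> a \<in> carrier R" using a by simp
        fix N assume N: "submodule N R M"
        have Nc: "N \<subseteq> carrier M" using N submoduleE(1) by blast
        obtain F where F: "fg_submodule R M F" "F \<subseteq> N" "(\<lambda>x. a \<odot>\<^bsub>M\<^esub> x) ` N \<subseteq> F"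
          using asm N unfolding good_def by blast
        have FS: "submodule F R M" using F(1) unfolding fg_submodule_def by blast
        have "(\<lambda>x. (\<ominus> a) \<odot>\<^bsub>M\<^esub> x) ` N \<subseteq> F"
        proof
          fix y assume "y \<in> (\<lambda>x. (\<ominus> a) \<odot>\<^bsub>M\<^esub> x) ` N"
          then obtain x where x: "x \<in> N" "y = (\<ominus> a) \<odot>\<^bsub>M\<^esub> x" by blast
          have "y = \<ominus>\<^bsub>M\<^esub> (a \<odot>\<^bsub>M\<^esub> x)" using x a Nc smult_l_minus by auto
          moreover have "a \<odot>\<^bsub>M\<^esub> x \<in> F" using F(3) x by blast
          ultimately show "y \<in> F" using submoduleE(3)[OF FS] by blast
        qed
        then show "\<exists>F. fg_submodule R M F \<and> F \<subseteq> N \<and> (\<lambda>x. (\<ominus> a) \<odot>\<^bsub>M\<^esub> x) ` N \<subseteq> F"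
          using F by blast
      qed
      then show ?thesis by simp
    qed
    show "a \<oplus> b \<in> {r. good r}" if asm: "a \<in> {r. good r}" "b \<in> {r. good r}" for a b
    proof -
      have a: "a \<in> carrier R" and b: "b \<in> carrier R" using asm unfolding good_def by auto
      have "good (a \<oplus> b)" unfolding good_def
      proof (intro conjI allI impI)
        show "a \<oplus> b \<in> carrier R" using a b by simp
        fix N assume N: "submodule N R M"
        have Nc: "N \<subseteq> carrier M" using N submoduleE(1) by blast
        obtain F1 where F1: "fg_submodule R M F1" "F1 \<subseteq> N" "(\<lambda>x. a \<odot>\<^bsub>M\<^esub> x) ` N \<subseteq> F1"
          using asm(1) N unfolding good_def by blast
        obtain F2 where F2: "fg_submodule R M F2" "F2 \<subseteq> N" "(\<lambda>x. b \<odot>\<^bsub>M\<^esub> x) ` N \<subseteq> F2"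
          using asm(2) N unfolding good_def by blast
        obtain A1 where A1: "finite A1" "A1 \<subseteq> carrier M" "F1 = gen_submodule R M A1"
          using F1(1) unfolding fg_submodule_def by blast
        obtain A2 where A2: "finite A2" "A2 \<subseteq> carrier M" "F2 = gen_submodule R M A2"
          using F2(1) unfolding fg_submodule_def by blast
        let ?F = "gen_submodule R M (A1 \<union> A2)"
        have FS: "submodule ?F R M" using gen_sub A1 A2 by auto
        have fg: "fg_submodule R M ?F" unfolding fg_submodule_def using FS A1 A2 by blast
        have sub1: "F1 \<subseteq> ?F" using A1 A2 gen_mono[of A1 "A1 \<union> A2"] by auto
        have sub2: "F2 \<subseteq> ?F" using A1 A2 gen_mono[of A2 "A1 \<union> A2"] by auto
        have "A1 \<union> A2 \<subseteq> N" using gen_incl[of A1] gen_incl[of A2] A1 A2 F1 F2 by blast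
        then have FN: "?F \<subseteq> N" using gen_min[OF N] by blast
        have "(\<lambda>x. (a \<oplus> b) \<odot>\<^bsub>M\<^esub> x) ` N \<subseteq> ?F"
        proof
          fix y assume "y \<in> (\<lambda>x. (a \<oplus> b) \<odot>\<^bsub>M\<^esub> x) ` N"
          then obtain x where x: "x \<in> N" "y = (a \<oplus> b) \<odot>\<^bsub>M\<^esub> x" by blast
          have "y = a \<odot>\<^bsub>M\<^esub> x \<oplus>\<^bsub>M\<^esub> b \<odot>\<^bsub>M\<^esub> x" using x a b Nc smult_l_distr by auto
          moreover have "a \<odot>\<^bsub>M\<^esub> x \<in> ?F" using F1(3) x sub1 by blast
          moreover have "b \<odot>\<^bsub>M\<^esub> x \<in> ?F" using F2(3) x sub2 by blast
          ultimately show "y \<in> ?F" using submoduleE(5)[OF FS] by simp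
        qed
        then show "\<exists>F. fg_submodule R M F \<and> F \<subseteq> N \<and> (\<lambda>x. (a \<oplus> b) \<odot>\<^bsub>M\<^esub> x) ` N \<subseteq> F"
          using fg FN by blast
      qed
      then show ?thesis by simp
    qed
  qed
  show lc: "x \<otimes> a \<in> {r. good r}" if asm: "a \<in> {r. good r}" "x \<in> carrier R" for a x
  proof -
    have a: "a \<in> carrier R" using asm unfolding good_def by auto
    have "good (x \<otimes> a)" unfolding good_def
    proof (intro conjI allI impI)
      show "x \<otimes> a \<in> carrier R" using a asm(2) by simp
      fix N assume N: "submodule N R M"
      have Nc: "N \<subseteq> carrier M" using N submoduleE(1) by blast
      obtain F where F: "fg_submodule R M F" "F \<subseteq> N" "(\<lambda>y. a \<odot>\<^bsub>M\<^esub> y) ` N \<subseteq> F"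
        using asm(1) N unfolding good_def by blast
      have FS: "submodule F R M" using F(1) unfolding fg_submodule_def by blast
      have "(\<lambda>y. (x \<otimes> a) \<odot>\<^bsub>M\<^esub> y) ` N \<subseteq> F"
      proof
        fix y assume "y \<in> (\<lambda>y. (x \<otimes> a) \<odot>\<^bsub>M\<^esub> y) ` N"
        then obtain z where z: "z \<in> N" "y = (x \<otimes> a) \<odot>\<^bsub>M\<^esub> z" by blast
        have "y = x \<odot>\<^bsub>M\<^esub> (a \<odot>\<^bsub>M\<^esub> z)" using z a asm(2) Nc smult_assoc1 by (simp add: subset_iff)
        moreover have "a \<odot>\<^bsub>M\<^esub> z \<in> F" using F(3) z by blast
        ultimately show "y \<in> F" using submoduleE(4)[OF FS] asm(2) by blast
      qed
      then show "\<exists>F. fg_submodule R M F \<and> F \<subseteq> N \<and> (\<lambda>y. (x \<otimes> a) \<odot>\<^bsub>M\<^esub> y) ` N \<subseteq> F"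
        using F by blast
    qed
    then show ?thesis by simp
  qed
  show "a \<otimes> x \<in> {r. good r}" if asm: "a \<in> {r. good r}" "x \<in> carrier R" for a x
  proof -
    have "a \<in> carrier R" using asm(1) unfolding good_def by simp
    then show ?thesis using lc[OF asm] asm(2) R.m_comm by metis
  qed
qed

lemma uniform_max_imp_noeth:
  assumes H: "\<forall>m. maximalideal m R \<longrightarrow> uniformly_S_noetherian R M (carrier R - m)"
  shows "noetherian_module R M"
proof -
  have "good \<one>"
  proof (rule ccontr)
    assume "\<not> good \<one>"
    then obtain m where m: "maximalideal m R" "{r. good r} \<subseteq> m"
      using R.exists_maximalideal[OF good_ideal] by auto
    then obtain s where "s \<in> carrier R - m" and "\<forall>N. submodule N R M \<longrightarrow>
        (\<exists>F. fg_submodule R M F \<and> F \<subseteq> N \<and> (\<lambda>x. s \<odot>\<^bsub>M\<^esub> x) ` N \<subseteq> F)"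
      using H unfolding uniformly_S_noetherian_def by blast
    then have "good s" "s \<notin> m" unfolding good_def by auto
    then show False using m by blast
  qed
  show ?thesis unfolding noetherian_module_def
  proof (intro allI impI)
    fix N assume N: "submodule N R M"
    have Nc: "N \<subseteq> carrier M" using N submoduleE(1) by blast
    obtain F where F: "fg_submodule R M F" "F \<subseteq> N" "(\<lambda>x. \<one> \<odot>\<^bsub>M\<^esub> x) ` N \<subseteq> F"
      using \<open>good \<one>\<close> N unfolding good_def by blast
    have "N \<subseteq> F"
    proof
      fix x assume "x \<in> N"
      then have "\<one> \<odot>\<^bsub>M\<^esub> x \<in> F" using F(3) by blast
      then show "x \<in> F" using \<open>x \<in> N\<close> Nc by (metis smult_one subsetD)
    qed
    then show "fg_submodule R M N" using F by (metis subset_antisym)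
  qed
qed

lemma noeth_imp_uniform:
  assumes "noetherian_module R M" "ideal P R" "carrier R \<noteq> P"
  shows "uniformly_S_noetherian R M (carrier R - P)"
  unfolding uniformly_S_noetherian_def
proof (intro bexI allI impI)
  have "\<one> \<notin> P" using assms(2,3) ideal.one_imp_carrier by blast
  then show "\<one> \<in> carrier R - P" by simp
  fix N assume N: "submodule N R M"
  have Nc: "N \<subseteq> carrier M" using N submoduleE(1) by blast
  have "fg_submodule R M N" using assms(1) N unfolding noetherian_module_def by blast
  moreover have "(\<lambda>x. \<one> \<odot>\<^bsub>M\<^esub> x) ` N \<subseteq> N" using Nc by auto
  ultimately show "\<exists>F. fg_submodule R M F \<and> F \<subseteq> N \<and> (\<lambda>x. \<one> \<odot>\<^bsub>M\<^esub> x) ` N \<subseteq> F" by blast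
qed

end

theorem proposition2p16:
  fixes R :: "('a, 'c) ring_scheme" and M :: "('a, 'b, 'm) module_scheme"
  assumes "module R M"
  shows "(noetherian_module R M \<longleftrightarrow>
            (\<forall>P. primeideal P R \<longrightarrow> uniformly_S_noetherian R M (carrier R - P)))
       \<and> (noetherian_module R M \<longleftrightarrow>
            (\<forall>m. maximalideal m R \<longrightarrow> uniformly_S_noetherian R M (carrier R - m)))"
proof -
  interpret module R M by fact
  have A: "noetherian_module R M \<Longrightarrow> primeideal P R \<Longrightarrow> uniformly_S_noetherian R M (carrier R - P)" for P
    using noeth_imp_uniform primeideal.axioms(1) primeideal.I_notcarr by blast
  have B: "noetherian_module R M \<Longrightarrow> maximalideal P R \<Longrightarrow> uniformly_S_noetherian R M (carrier R - P)" for P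
    using noeth_imp_uniform maximalideal.axioms(1) maximalideal.I_notcarr by blast
  have C: "(\<forall>P. primeideal P R \<longrightarrow> uniformly_S_noetherian R M (carrier R - P)) \<Longrightarrow>
           (\<forall>m. maximalideal m R \<longrightarrow> uniformly_S_noetherian R M (carrier R - m))"
    using R.maximalideal_prime by blast
  show ?thesis using A B C uniform_max_imp_noeth by blast
qed

end
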